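(* Let $N\ge3$ and for $1\le k<N/2$ let $s_k=\tan(k\pi/N)$. Then every $s_k$ with $1\le k<N/2$ and $\gcd(k,N)>1$ can be written as a $\mathbb{Q}$-linear combination of the $s_j$ with $1\le j<N/2$ and $\gcd(j,N)=1$.
   Context: The $s_k$ with $\gcd(k,N)=1$ are called primitive star points and those with $\gcd(k,N)>1$ degenerate star points of the regular $N$-gon. *)

theory Defs
  imports Complex_Main
begin

definition star_point :: "nat \<Rightarrow> nat \<Rightarrow> real" where
  "star_point N k = tan (real k * pi / real N)"

end

theory Submission
  imports Defs "HOL-Number_Theory.Number_Theory"
begin


lemma cis2_plus1: "cis (2*x) + 1 = 2 * complex_of_real (cos x) * cis x"
proof -
  have c: "cos(2*x) = 2*cos x*cos x - 1" using cos_double_cos[of x] by (simp add: power2_eq_square)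
  show ?thesis using sin_double[of x] c by (simp add: complex_eq_iff)
qed

lemma cis2_minus1: "cis (2*x) - 1 = 2 * \<i> * complex_of_real (sin x) * cis x"
proof -
  have c: "cos(2*x) = 1 - 2*sin x*sin x" using cos_double_sin[of x] by (simp add: power2_eq_square)
  show ?thesis using sin_double[of x] c by (simp add: complex_eq_iff)
qed

lemma tan_cis:
  assumes "cos x \<noteq> 0"
  shows "complex_of_real (tan x) = - \<i> * (cis (2*x) - 1) / (cis (2*x) + 1)"
proof -
  have "cis (2*x) + 1 \<noteq> 0" using assms by (simp add: cis2_plus1)
  then show ?thesis using assms unfolding cis2_plus1 cis2_minus1
    by (simp add: tan_def field_simps)
qed

lemma root_sum:
  fixes a :: complex and p :: nat
  assumes p: "p > 0" and ap: "a ^ p \<noteq> 1"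
  defines "\<zeta> \<equiv> cis (2*pi/p)"
  shows "(\<Sum>m<p. 1 / (1 - a * \<zeta>^m)) = of_nat p / (1 - a ^ p)"
proof -
  have zp: "\<zeta>^p = 1" using p by (simp add: \<zeta>_def DeMoivre)
  have zn: "\<zeta>^n \<noteq> 1" if "0 < n" "n < p" for n
  proof
    assume "\<zeta>^n = 1"
    then have "cos (real n * (2*pi/p)) = 1" by (simp add: \<zeta>_def DeMoivre complex_eq_iff)
    then obtain k :: int where k: "real n * (2*pi/p) = k * 2 * pi" by (auto simp: cos_one_2pi_int)
    then have "real n = k * p" using p by (simp add: field_simps)
    then have "int n = k * int p" by (metis of_int_eq_iff of_int_mult of_int_of_nat_eq)
    then have "int p dvd int n" by simp
    then have "p dvd n" by simp
    then show False using that by (auto dest: dvd_imp_le)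
  qed
  have zmp: "(\<zeta>^m)^p = 1" for m
    by (metis power_mult mult.commute power_one zp)
  have ne: "1 - a * \<zeta>^m \<noteq> 0" for m
  proof
    assume "1 - a * \<zeta>^m = 0"
    then have "(a * \<zeta>^m)^p = 1" by simp
    then have "a^p * (\<zeta>^m)^p = 1" by (simp add: power_mult_distrib)
    with zmp ap show False by simp
  qed
  have geo: "1 / (1 - a * \<zeta>^m) = (\<Sum>n<p. a^n * (\<zeta>^m)^n) / (1 - a^p)" for m
  proof -
    have "(1 - a * \<zeta>^m) * (\<Sum>n<p. (a * \<zeta>^m)^n) = 1 - (a*\<zeta>^m)^p"
      by (rule one_diff_power_eq[symmetric])
    also have "(a*\<zeta>^m)^p = a^p"
      using zmp by (simp add: power_mult_distrib)
    finally show ?thesis using ne ap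
      by (simp add: field_simps power_mult_distrib)
  qed
  have inner: "(\<Sum>m<p. (\<zeta>^m)^n) = (if n = 0 then of_nat p else 0)" if "n < p" for n
  proof (cases "n = 0")
    case False
    have "(\<Sum>m<p. (\<zeta>^m)^n) = (\<Sum>m<p. (\<zeta>^n)^m)" by (metis power_mult mult.commute)
    also have "(\<zeta>^n)^p = 1" by (metis power_mult mult.commute power_one zp)
    then have "(\<Sum>m<p. (\<zeta>^n)^m) = 0" using zn[of n] False that
      by (simp add: sum_gp_strict)
    finally show ?thesis using False by simp
  qed simp
  have "(\<Sum>m<p. 1 / (1 - a * \<zeta>^m)) = (\<Sum>m<p. \<Sum>n<p. a^n * (\<zeta>^m)^n) / (1 - a^p)"
    by (simp add: geo sum_divide_distrib)
  also have "(\<Sum>m<p. \<Sum>n<p. a^n * (\<zeta>^m)^n) = (\<Sum>n<p. a^n * (\<Sum>m<p. (\<zeta>^m)^n))"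
    by (subst sum.swap) (simp add: sum_distrib_left)
  also have "\<dots> = (\<Sum>n<p. if n = 0 then of_nat p else 0)"
    by (rule sum.cong) (auto simp: inner)
  also have "\<dots> = of_nat p" using p by simp
  finally show ?thesis .
qed

lemma tan_sum_odd:
  assumes p: "odd p" and c: "cos (real p * t) \<noteq> 0"
  shows "(\<Sum>m<p. tan (t + real m * pi / real p)) = real p * tan (real p * t)"
proof -
  define w where "w = cis (2*t)"
  define \<zeta> where "\<zeta> = cis (2*pi/p)"
  define a where "a = - w"
  have p0: "p > 0" using p by (cases p) auto
  have cisx: "cis (2*(t + real m * pi / real p)) = w * \<zeta>^m" for m
  proof -
    have e: "2*t + real m * (2*pi/p) = 2*(t + real m * pi / real p)" by (simp add: field_simps)
    show ?thesis unfolding e[symmetric] by (simp add: w_def \<zeta>_def DeMoivre cis_mult)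
  qed
  have wp: "w^p = cis (2*(real p * t))" by (simp add: w_def DeMoivre algebra_simps)
  have ap: "a^p = - cis (2*(real p * t))" using p by (simp add: a_def wp)
  have cp: "cis (2*(real p * t)) + 1 \<noteq> 0" using c by (simp add: cis2_plus1)
  have ap1: "a^p \<noteq> 1"
  proof
    assume "a^p = 1"
    then have "- cis (2*(real p * t)) = 1" using ap by simp
    then have "cis (2*(real p * t)) = -1" by (metis minus_minus)
    then have "cis (2*(real p * t)) + 1 = 0" by simp
    with cp show False by simp
  qed
  have zp: "\<zeta>^p = 1" using p0 by (simp add: \<zeta>_def DeMoivre)
  have zmp: "(\<zeta>^m)^p = 1" for m
    by (metis power_mult mult.commute power_one zp)
  have ne: "1 - a * \<zeta>^m \<noteq> 0" for m
  proof
    assume "1 - a * \<zeta>^m = 0"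
    then have "(a * \<zeta>^m)^p = 1" by simp
    then have "a^p * (\<zeta>^m)^p = 1" by (simp add: power_mult_distrib)
    with zmp ap1 show False by simp
  qed
  have tm: "complex_of_real (tan (t + real m * pi / real p)) = - \<i> * (1 - 2 / (1 - a * \<zeta>^m))" for m
  proof -
    let ?x = "t + real m * pi / real p"
    have c2: "cis (2 * ?x) = - a * \<zeta>^m" by (subst cisx) (simp add: a_def)
    have e: "cis (2 * ?x) + 1 = 1 - a * \<zeta>^m" unfolding c2 by simp
    have "cos ?x \<noteq> 0"
    proof
      assume "cos ?x = 0"
      then have "cis (2 * ?x) + 1 = 0" unfolding cis2_plus1 by simp
      with e ne show False by simp
    qed
    then have "complex_of_real (tan ?x) = - \<i> * (cis (2*?x) - 1) / (cis (2*?x) + 1)" by (rule tan_cis)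
    also have "\<dots> = - \<i> * (- a * \<zeta>^m - 1) / (1 - a * \<zeta>^m)" unfolding e unfolding c2 ..
    also have "\<dots> = - \<i> * (1 - 2 / (1 - a * \<zeta>^m))" using ne[of m]
      by (simp add: field_simps)
    finally show ?thesis .
  qed
  have "complex_of_real (\<Sum>m<p. tan (t + real m * pi / real p)) = (\<Sum>m<p. - \<i> * (1 - 2 / (1 - a * \<zeta>^m)))"
    by (simp only: of_real_sum tm)
  also have "\<dots> = - \<i> * (of_nat p - 2 * (\<Sum>m<p. 1 / (1 - a * \<zeta>^m)))"
    by (simp add: sum_distrib_left sum_subtractf sum_divide_distrib[symmetric] algebra_simps sum_negf)
  also have "(\<Sum>m<p. 1 / (1 - a * \<zeta>^m)) = of_nat p / (1 - a^p)"
    unfolding \<zeta>_def by (rule root_sum[OF p0 ap1])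
  also have "- \<i> * (of_nat p - 2 * (of_nat p / (1 - a^p))) = of_nat p * (- \<i> * (cis (2*(real p * t)) - 1) / (cis (2*(real p * t)) + 1))"
    using cp by (simp add: ap field_simps)
  also have "\<dots> = complex_of_real (real p * tan (real p * t))"
    using tan_cis[OF c] by simp
  finally show ?thesis by (simp only: of_real_eq_iff)
qed

lemma tan_shift1: "tan (pi/2 - x) = cos x / sin x"
  by (simp add: tan_def sin_diff cos_diff)

lemma tan_shift2: "tan (x - pi/2) = - cos x / sin x"
  by (simp add: tan_def sin_diff cos_diff)

lemma tan_J1:
  assumes "sin (2*b) \<noteq> 0"
  shows "tan b = tan (pi/2 - b) + 2 * tan (2*b - pi/2)"
proof -
  have s: "sin b \<noteq> 0" "cos b \<noteq> 0" using assms by (auto simp: sin_double)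
  have "tan (2*b - pi/2) = - cos (2*b) / sin (2*b)" by (rule tan_shift2)
  also have "\<dots> = - (cos b * cos b - sin b * sin b) / (2 * sin b * cos b)"
    by (simp add: cos_double sin_double power2_eq_square)
  finally have B: "tan (2*b - pi/2) = - (cos b * cos b - sin b * sin b) / (2 * sin b * cos b)" .
  have C: "tan b = sin b / cos b" by (simp add: tan_def)
  show ?thesis unfolding B C tan_shift1 using s by (simp add: field_simps)
qed

lemma tan_J2:
  assumes "cos (2*t) \<noteq> 0"
  shows "2 * tan (2*t) = tan (t + pi/4) + tan (t + 3*pi/4)"
proof -
  define b where "b = t + pi/4"
  have t2: "2*t = 2*b - pi/2" by (simp add: b_def)
  have t3: "t + 3*pi/4 = b + pi/2" by (simp add: b_def)
  have sb: "sin (2*b) \<noteq> 0" using assms unfolding t2 by (simp add: sin_diff cos_diff)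
  have s: "sin b \<noteq> 0" "cos b \<noteq> 0" using sb by (auto simp: sin_double)
  have B: "tan (2*b - pi/2) = - (cos b * cos b - sin b * sin b) / (2 * sin b * cos b)"
    unfolding tan_shift2 by (simp add: cos_double sin_double power2_eq_square)
  have D: "tan (b + pi/2) = - cos b / sin b" by (simp add: tan_def sin_add cos_add)
  have C: "tan b = sin b / cos b" by (simp add: tan_def)
  have E: "t + pi/4 = b" by (simp add: b_def)
  show ?thesis unfolding t2 t3 E B C D using s by (simp add: field_simps)
qed


definition TT :: "nat \<Rightarrow> int \<Rightarrow> real" where
  "TT N x = tan (of_int x * pi / real N)"

definition PP :: "nat \<Rightarrow> nat set" where
  "PP N = {j. 1 \<le> j \<and> 2 * j < N \<and> gcd j N = 1}"

definition inV :: "nat \<Rightarrow> real \<Rightarrow> bool" where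
  "inV N r \<longleftrightarrow> (\<exists>c :: nat \<Rightarrow> rat. r = (\<Sum>j\<in>PP N. of_rat (c j) * star_point N j))"

lemma finite_PP: "finite (PP N)"
  by (rule finite_subset[of _ "{..<N}"]) (auto simp: PP_def)

lemma inV_0: "inV N 0"
  unfolding inV_def by (rule exI[of _ "\<lambda>_. 0"]) simp

lemma inV_add: "inV N a \<Longrightarrow> inV N b \<Longrightarrow> inV N (a + b)"
  unfolding inV_def
proof (elim exE)
  fix c d assume "a = (\<Sum>j\<in>PP N. of_rat (c j) * star_point N j)" "b = (\<Sum>j\<in>PP N. of_rat (d j) * star_point N j)"
  then show "\<exists>e. a + b = (\<Sum>j\<in>PP N. of_rat (e j) * star_point N j)"
    by (intro exI[of _ "\<lambda>j. c j + d j"]) (simp add: of_rat_add distrib_right sum.distrib)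
qed

lemma inV_scale: "inV N a \<Longrightarrow> inV N (of_rat q * a)"
  unfolding inV_def
proof (elim exE)
  fix c assume "a = (\<Sum>j\<in>PP N. of_rat (c j) * star_point N j)"
  then show "\<exists>e. of_rat q * a = (\<Sum>j\<in>PP N. of_rat (e j) * star_point N j)"
    by (intro exI[of _ "\<lambda>j. q * c j"]) (simp add: of_rat_mult sum_distrib_left mult.assoc)
qed

lemma inV_neg: "inV N a \<Longrightarrow> inV N (- a)"
  using inV_scale[of N a "-1"] by simp

lemma inV_diff: "inV N a \<Longrightarrow> inV N b \<Longrightarrow> inV N (a - b)"
  using inV_add[of N a "-b"] inV_neg[of N b] by simp

lemma inV_sum: "finite A \<Longrightarrow> (\<And>a. a \<in> A \<Longrightarrow> inV N (f a)) \<Longrightarrow> inV N (\<Sum>a\<in>A. f a)"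
  by (induction A rule: finite_induct) (auto intro: inV_0 inV_add)

lemma inV_basis: "j \<in> PP N \<Longrightarrow> inV N (star_point N j)"
  unfolding inV_def
proof (intro exI[of _ "\<lambda>i. if i = j then 1 else 0"])
  assume j: "j \<in> PP N"
  have "(\<Sum>i\<in>PP N. of_rat (if i = j then 1 else 0) * star_point N i) = (\<Sum>i\<in>PP N. if i = j then star_point N i else 0)"
    by (rule sum.cong) auto
  also have "\<dots> = star_point N j" using j finite_PP by (simp add: sum.delta)
  finally show "star_point N j = (\<Sum>i\<in>PP N. of_rat (if i = j then 1 else 0) * star_point N i)" by simp
qed

lemma star_TT: "star_point N j = TT N (int j)"
  by (simp add: star_point_def TT_def)

lemma TT_per: "N > 0 \<Longrightarrow> TT N (x + int N * k) = TT N x"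
proof -
  assume N: "N > 0"
  have "of_int (x + int N * k) * pi / real N = of_int x * pi / real N + of_int k * pi"
    using N by (simp add: field_simps)
  then show ?thesis by (simp add: TT_def)
qed

lemma TT_cong: "N > 0 \<Longrightarrow> [x = y] (mod int N) \<Longrightarrow> TT N x = TT N y"
  by (metis TT_per cong_iff_lin)

lemma TT_neg: "TT N (- x) = - TT N x"
  by (simp add: TT_def)

lemma TT_scale: "d > 0 \<Longrightarrow> TT (d * N) (int d * x) = TT N x"
  by (simp add: TT_def field_simps)

lemma cycle_tel:
  fixes c :: real and G :: "nat \<Rightarrow> real"
  shows "(\<Sum>i<L. c^(L - Suc i) * (c * G i - G (Suc i))) = c^L * G 0 - G L"
proof (induction L)
  case (Suc L)
  have "(\<Sum>i<Suc L. c^(Suc L - Suc i) * (c * G i - G (Suc i)))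
      = (\<Sum>i<L. c * (c^(L - Suc i) * (c * G i - G (Suc i)))) + (c * G L - G (Suc L))"
  proof -
    have "(\<Sum>i<L. c^(Suc L - Suc i) * (c * G i - G (Suc i))) = (\<Sum>i<L. c * (c^(L - Suc i) * (c * G i - G (Suc i))))"
    proof (rule sum.cong)
      fix i assume "i \<in> {..<L}"
      then have "Suc L - Suc i = Suc (L - Suc i)" by auto
      then show "c^(Suc L - Suc i) * (c * G i - G (Suc i)) = c * (c^(L - Suc i) * (c * G i - G (Suc i)))" by simp
    qed simp
    then show ?thesis by simp
  qed
  also have "\<dots> = c * (c^L * G 0 - G L) + (c * G L - G (Suc L))"
    by (simp add: sum_distrib_left[symmetric] Suc.IH)
  finally show ?case by (simp add: algebra_simps)
qed simp

lemma inV_cycle: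
  fixes G :: "nat \<Rightarrow> real" and c :: rat
  assumes step: "\<And>i. i < L \<Longrightarrow> inV N (of_rat c * G i - G (Suc i))"
    and per: "G L = G 0" and cL: "c ^ L \<noteq> 1"
  shows "inV N (G 0)"
proof -
  have "inV N (\<Sum>i<L. of_rat c^(L - Suc i) * (of_rat c * G i - G (Suc i)))"
    by (rule inV_sum) (auto intro!: step simp: of_rat_power[symmetric] intro: inV_scale)
  then have "inV N ((of_rat c)^L * G 0 - G 0)" unfolding cycle_tel per .
  then have "inV N (of_rat (c^L - 1) * G 0)" by (simp add: of_rat_diff of_rat_power algebra_simps)
  then have "inV N (of_rat (1 / (c^L - 1)) * (of_rat (c^L - 1) * G 0))" by (rule inV_scale)
  then show ?thesis using cL by (simp add: of_rat_mult[symmetric] mult.assoc[symmetric])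
qed

lemma PP_mem: "1 \<le> j \<Longrightarrow> 2 * j < N \<Longrightarrow> coprime (int j) (int N) \<Longrightarrow> j \<in> PP N"
  unfolding PP_def by (auto simp: coprime_iff_gcd_eq_1[symmetric])

lemma unit_inV:
  assumes N: "N \<ge> 3" and cx: "coprime x (int N)"
  shows "inV N (TT N x)"
proof -
  define r where "r = x mod int N"
  have r0: "0 \<le> r" "r < int N" using N by (auto simp: r_def)
  have Tr: "TT N x = TT N r" using N unfolding r_def by (intro TT_cong) (auto simp: cong_def)
  have "[x = r] (mod int N)" unfolding r_def by (simp add: cong_def)
  then have cr: "coprime r (int N)" using cx by (rule cong_imp_coprime)
  define j where "j = nat r"
  have rj: "r = int j" using r0 by (simp add: j_def)
  have cj: "coprime (int j) (int N)" using cr rj by simp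
  have j0: "j \<noteq> 0"
  proof
    assume "j = 0"
    then have "coprime 0 (int N)" using cj by simp
    then show False using N by simp
  qed
  have j2: "2 * j \<noteq> N"
  proof
    assume h: "2 * j = N"
    then have "int j dvd int N" by (metis dvd_triv_right of_nat_dvd_iff)
    then have "is_unit (int j)" using cj by (metis coprime_absorb_right coprime_commute)
    then have "j = 1" by simp
    then show False using h N by simp
  qed
  show ?thesis
  proof (cases "2 * j < N")
    case True
    then have "j \<in> PP N" using j0 cj by (intro PP_mem) auto
    then show ?thesis using Tr rj by (metis inV_basis star_TT)
  next
    case False
    then have jN: "N < 2 * j" using j2 by simp
    have jlt: "j < N" using r0 rj by simp
    have c2: "coprime (int (N - j)) (int N)"
    proof -
      have "int (N - j) = int N - int j" using jlt by simp
      then have "[- int j = int (N - j)] (mod int N)" by (simp add: cong_iff_lin)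
      moreover have "coprime (- int j) (int N)" using cj by simp
      ultimately show ?thesis by (rule cong_imp_coprime)
    qed
    have "N - j \<in> PP N" using jN jlt c2 by (intro PP_mem) auto
    then have "inV N (- star_point N (N - j))" by (intro inV_neg inV_basis)
    moreover have "TT N x = - star_point N (N - j)"
    proof -
      have "TT N (int j) = TT N (int j + int N * (-1))" using N by (simp only: TT_per)
      also have "int j + int N * (-1) = - int (N - j)" using jlt by simp
      finally show ?thesis using Tr rj by (simp add: TT_neg star_TT)
    qed
    ultimately show ?thesis by simp
  qed
qed

lemma cos_ne:
  assumes M: "M \<ge> 3" and cu: "coprime u (int M)"
  shows "cos (of_int u * pi / real M) \<noteq> 0"
proof
  assume "cos (of_int u * pi / real M) = 0"
  then obtain n :: int where n: "of_int u * pi / real M = of_int n * pi + pi/2" by (auto simp: cos_zero_iff_int2)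
  then have "(2 * of_int u) * pi = ((2 * of_int n + 1) * real M) * pi" using M by (simp add: field_simps)
  then have "2 * of_int u = (2 * of_int n + 1) * real M" by simp
  then have "real_of_int (2 * u) = real_of_int ((2 * n + 1) * int M)" by simp
  then have "2 * u = (2 * n + 1) * int M" by (simp only: of_int_eq_iff)
  then have "int M dvd 2 * u" by (metis dvd_triv_right)
  moreover have "coprime (int M) u" using cu by (simp add: coprime_commute)
  ultimately have "int M dvd 2" by (simp add: coprime_dvd_mult_left_iff)
  then have "int M \<le> 2" by (rule zdvd_imp_le) simp
  then show False using M by simp
qed

lemma sin2_ne:
  assumes M: "M \<ge> 3" and cu: "coprime u (int M)"
  shows "sin (2 * (of_int u * pi / real M)) \<noteq> 0"
proof
  assume "sin (2 * (of_int u * pi / real M)) = 0"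
  then obtain n :: int where n: "2 * (of_int u * pi / real M) = of_int n * pi" by (auto simp: sin_zero_iff_int2)
  then have "(2 * of_int u) * pi = (of_int n * real M) * pi" using M by (simp add: field_simps)
  then have "2 * of_int u = of_int n * real M" by simp
  then have "real_of_int (2 * u) = real_of_int (n * int M)" by simp
  then have "2 * u = n * int M" by (simp only: of_int_eq_iff)
  then have "int M dvd 2 * u" by (metis dvd_triv_right)
  moreover have "coprime (int M) u" using cu by (simp add: coprime_commute)
  ultimately have "int M dvd 2" by (simp add: coprime_dvd_mult_left_iff)
  then have "int M \<le> 2" by (rule zdvd_imp_le) simp
  then show False using M by simp
qed

lemma odd_rel:
  assumes p: "odd p" and M: "M > 0" and c: "cos (of_int z * pi / real M) \<noteq> 0"
  shows "real p * TT (p*M) (int p * z) = (\<Sum>m<p. TT (p*M) (z + int m * int M))"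
proof -
  have p0: "p > 0" using p by (cases p) auto
  define t where "t = of_int z * pi / real (p*M)"
  have pt: "real p * t = of_int z * pi / real M" using p0 M by (simp add: t_def field_simps)
  have "(\<Sum>m<p. tan (t + real m * pi / real p)) = real p * tan (real p * t)"
    by (rule tan_sum_odd[OF p]) (simp add: pt c)
  moreover have "t + real m * pi / real p = of_int (z + int m * int M) * pi / real (p*M)" for m
    using p0 M by (simp add: t_def field_simps)
  moreover have "of_int (int p * z) * pi / real (p*M) = real p * t"
    using p0 M by (simp add: t_def field_simps)
  ultimately show ?thesis by (simp add: TT_def)
qed

lemma J2_rel:
  assumes n: "n > 0" and c: "cos (2 * (of_int z * pi / real (4*n))) \<noteq> 0"
  shows "2 * TT (4*n) (2 * z) = TT (4*n) (z + int n) + TT (4*n) (z + 3 * int n)"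
proof -
  define t where "t = of_int z * pi / real (4*n)"
  have "2 * tan (2*t) = tan (t + pi/4) + tan (t + 3*pi/4)"
    by (rule tan_J2) (use c in \<open>simp add: t_def\<close>)
  moreover have "t + pi/4 = of_int (z + int n) * pi / real (4*n)" using n by (simp add: t_def field_simps)
  moreover have "t + 3*pi/4 = of_int (z + 3 * int n) * pi / real (4*n)" using n by (simp add: t_def field_simps)
  moreover have "of_int (2 * z) * pi / real (4*n) = 2*t" using n by (simp add: t_def field_simps)
  ultimately show ?thesis by (simp add: TT_def)
qed

lemma J1_rel:
  assumes M: "M \<ge> 3" and cu: "coprime u (int M)"
  shows "TT M u = TT (2*M) (int M - 2*u) + 2 * TT (2*M) (4*u - int M)"
proof -
  define b where "b = of_int u * pi / real M"
  have "tan b = tan (pi/2 - b) + 2 * tan (2*b - pi/2)"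
    by (rule tan_J1) (use sin2_ne[OF M cu] in \<open>simp add: b_def\<close>)
  moreover have "pi/2 - b = of_int (int M - 2*u) * pi / real (2*M)" using M by (simp add: b_def field_simps)
  moreover have "2*b - pi/2 = of_int (4*u - int M) * pi / real (2*M)" using M by (simp add: b_def field_simps)
  ultimately show ?thesis by (simp add: TT_def b_def)
qed

lemma coprime_pM:
  assumes "coprime x (int p)" "coprime x (int M)"
  shows "coprime x (int (p*M))"
  using assms by simp

lemma step_odd_dvd:
  assumes pp: "prime p" and po: "odd p" and pM: "p dvd M" and M: "M \<ge> 3" and cu: "coprime u (int M)"
  shows "inV (p*M) (TT M u)"
proof -
  have p2: "p \<ge> 2" using pp by (simp add: prime_ge_2_nat)
  have N3: "p * M \<ge> 3" using p2 M by (metis le_trans mult_le_mono1 mult_1 one_le_numeral  numeral_le_iff semiring_norm(69) less_imp_le_nat less_le_trans mult.commute nat_mult_le_cancel_disj  order_refl)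
  have rel: "real p * TT (p*M) (int p * u) = (\<Sum>m<p. TT (p*M) (u + int m * int M))"
    by (rule odd_rel[OF po]) (use M cos_ne[OF M cu] in auto)
  have cup: "coprime u (int p)"
    by (rule coprime_divisors[OF dvd_refl _ cu]) (use pM in simp)
  have "inV (p*M) (\<Sum>m<p. TT (p*M) (u + int m * int M))"
  proof (rule inV_sum)
    fix m assume "m \<in> {..<p}"
    have c1: "coprime (u + int m * int M) (int M)"
      by (rule cong_imp_coprime[OF _ cu]) (simp add: cong_iff_lin)
    have "[u = u + int m * int M] (mod int p)"
      using pM by (simp add: cong_iff_lin) (metis dvd_def mult.commute mult.left_commute of_nat_dvd_iff)
    then have c2: "coprime (u + int m * int M) (int p)" using cup by (rule cong_imp_coprime)
    show "inV (p*M) (TT (p*M) (u + int m * int M))"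
      by (rule unit_inV[OF N3]) (use c1 c2 in simp)
  qed simp
  then have "inV (p*M) (of_rat (1 / of_nat p) * (real p * TT (p*M) (int p * u)))"
    unfolding rel by (rule inV_scale)
  moreover have "TT (p*M) (int p * u) = TT M u" using p2 by (intro TT_scale) simp
  ultimately show ?thesis using p2 by (simp add: of_rat_divide)
qed

lemma euler_int:
  assumes "coprime a M"
  shows "[int a ^ totient M = 1] (mod int M)"
  using euler_theorem[OF assms] by (metis cong_int_iff of_nat_1 of_nat_power)

lemma step_odd_ndvd:
  assumes pp: "prime p" and po: "odd p" and pM: "\<not> p dvd M" and M: "M \<ge> 3" and cu: "coprime u (int M)"
  shows "inV (p*M) (TT M u)"
proof -
  define N where "N = p * M"
  define L where "L = totient M"
  have p2: "p \<ge> 2" using pp by (simp add: prime_ge_2_nat)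
  have N3: "N \<ge> 3" unfolding N_def using p2 M by (metis le_trans mult_le_mono1 mult_1 one_le_numeral  numeral_le_iff semiring_norm(69) less_imp_le_nat less_le_trans mult.commute nat_mult_le_cancel_disj  order_refl)
  have L1: "L \<ge> 1" using M by (simp add: L_def Suc_le_eq)
  have cpM: "coprime p M" using pp pM by (simp add: prime_imp_coprime)
  have cpMi: "coprime (int p) (int M)" using cpM by simp
  have eu: "[int p ^ L = 1] (mod int M)" unfolding L_def by (rule euler_int[OF cpM])
  have rel: "inV N (of_rat (of_nat p) * TT M y - TT M (y * int p ^ (L - 1)))" if cy: "coprime y (int M)" for y
  proof -
    define z where "z = y * int p ^ L"
    have zy: "[z = y] (mod int M)" unfolding z_def using cong_scalar_left[OF eu, of y] by simp
    have cz: "coprime z (int M)" using cy zy by (metis cong_imp_coprime cong_sym)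
    have r: "real p * TT N (int p * z) = (\<Sum>m<p. TT N (z + int m * int M))"
      unfolding N_def by (rule odd_rel[OF po]) (use M cos_ne[OF M cz] in auto)
    have T1: "TT N (int p * z) = TT M y"
      unfolding N_def using p2 TT_scale[of p M z] TT_cong[OF _ zy] M by simp
    have zsplit: "z = int p * (y * int p ^ (L - 1))"
      unfolding z_def using L1 by (metis (no_types, lifting) mult.left_commute power_eq_if not_one_le_zero)
    have T0: "TT N z = TT M (y * int p ^ (L - 1))"
      unfolding zsplit N_def using p2 by (intro TT_scale) simp
    have sum_split: "(\<Sum>m<p. TT N (z + int m * int M)) = TT N z + (\<Sum>i<p - 1. TT N (z + int (Suc i) * int M))"
    proof -
      have "p = Suc (p - 1)" using p2 by simp
      then have "(\<Sum>m<p. TT N (z + int m * int M)) = (\<Sum>m<Suc (p-1). TT N (z + int m * int M))" by simp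
      also have "\<dots> = TT N z + (\<Sum>i<p - 1. TT N (z + int (Suc i) * int M))"
        by (subst sum.lessThan_Suc_shift) simp
      finally show ?thesis .
    qed
    have "inV N (\<Sum>i<p - 1. TT N (z + int (Suc i) * int M))"
    proof (rule inV_sum)
      fix i assume i: "i \<in> {..<p - 1}"
      have c1: "coprime (z + int (Suc i) * int M) (int M)"
        by (rule cong_imp_coprime[OF _ cz]) (simp add: cong_iff_lin)
      have ndvd: "\<not> int p dvd z + int (Suc i) * int M"
      proof
        assume h: "int p dvd z + int (Suc i) * int M"
        have "int p dvd z" unfolding zsplit by simp
        then have "int p dvd int (Suc i) * int M" using h by (simp add: dvd_add_right_iff)
        then have "p dvd Suc i * M" by (metis of_nat_dvd_iff of_nat_mult)
        then have "p dvd Suc i \<or> p dvd M" using pp prime_dvd_mult_iff by blast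
        then show False using pM i by (auto dest: dvd_imp_le)
      qed
      have "coprime (int p) (z + int (Suc i) * int M)"
        using ndvd pp by (intro prime_imp_coprime) simp_all
      then have c2: "coprime (z + int (Suc i) * int M) (int p)" by (simp add: coprime_commute)
      show "inV N (TT N (z + int (Suc i) * int M))"
        by (rule unit_inV[OF N3]) (use c1 c2 in \<open>simp add: N_def\<close>)
    qed simp
    moreover have "of_rat (of_nat p) * TT M y - TT M (y * int p ^ (L - 1)) = (\<Sum>i<p - 1. TT N (z + int (Suc i) * int M))"
      using r T1 T0 sum_split by simp
    ultimately show ?thesis by simp
  qed
  define G where "G i = TT M (u * int p ^ ((L - 1) * i))" for i
  have cG: "coprime (u * int p ^ k) (int M)" for k using cu cpMi by simp
  have "inV N (G 0)"
  proof (rule inV_cycle[where c = "of_nat p" and L = L])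
    fix i assume "i < L"
    have e: "(L - 1) * Suc i = (L - 1) * i + (L - 1)" by simp
    have "G (Suc i) = TT M (u * int p ^ ((L - 1) * i) * int p ^ (L - 1))"
      unfolding G_def e power_add by (simp add: mult.assoc)
    then show "inV N (of_rat (of_nat p) * G i - G (Suc i))"
      using rel[OF cG[of "(L - 1) * i"]] by (simp add: G_def)
  next
    have "[int p ^ ((L - 1) * L) = 1] (mod int M)"
      using cong_pow[OF eu, of "L - 1"] by (simp add: power_mult[symmetric] mult.commute)
    then have "[u * int p ^ ((L - 1) * L) = u * 1] (mod int M)" by (rule cong_scalar_left)
    then show "G L = G 0" unfolding G_def using M by (intro TT_cong) auto
  next
    have "(of_nat p :: rat) ^ L \<ge> of_nat p" using L1 p2 
      by (metis of_nat_le_iff of_nat_power power_increasing power_one_right  Suc_1 Suc_leD)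
    moreover have "(of_nat p :: rat) \<ge> 2" using p2 by simp
    ultimately show "(of_nat p :: rat) ^ L \<noteq> 1" by linarith
  qed
  then show ?thesis by (simp add: G_def N_def)
qed

lemma odd_cop4: "odd (x::int) \<Longrightarrow> coprime x 4"
  using coprime_power_right_iff[of x 2 2] by simp

lemma step_2_odd:
  assumes Mo: "odd M" and M: "M \<ge> 3" and cu: "coprime u (int M)"
  shows "inV (2*M) (TT M u)"
proof -
  have N3: "2 * M \<ge> 3" using M by simp
  have c2M: "coprime (2::int) (int M)" using Mo by simp
  have a1: "coprime (int M - 2*u) (int (2*M))"
  proof -
    have h: "coprime (- (2*u)) (int M)" using cu c2M by simp
    have "coprime (int M - 2*u) (int M)" by (rule cong_imp_coprime[OF _ h]) (simp add: cong_iff_lin)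
    moreover have "coprime (int M - 2*u) 2" using Mo by simp
    ultimately show ?thesis by simp
  qed
  have a2: "coprime (4*u - int M) (int (2*M))"
  proof -
    have c4: "coprime (4::int) (int M)" using coprime_power_left_iff[of 2 2 "int M"] c2M by simp
    have h: "coprime (2*(2*u)) (int M)" using cu c4 by simp
    have "coprime (4*u - int M) (int M)" by (rule cong_imp_coprime[OF _ h]) (unfold cong_iff_lin, rule exI[of _ "-1"], simp)
    moreover have "coprime (4*u - int M) 2" using Mo by simp
    ultimately show ?thesis by simp
  qed
  have "inV (2*M) (TT (2*M) (int M - 2*u) + of_rat 2 * TT (2*M) (4*u - int M))"
    by (intro inV_add inV_scale unit_inV[OF N3] a1 a2)
  then show ?thesis using J1_rel[OF M cu] by simp
qed

lemma step_2_four: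
  assumes M4: "4 dvd M" and M: "M \<ge> 3" and cu: "coprime u (int M)"
  shows "inV (2*M) (TT M u)"
proof -
  obtain k where Mk: "M = 4 * k" using M4 by (elim dvdE)
  define n where "n = 2 * k"
  have Mn: "M = 2 * n" and n2: "even n" using Mk by (simp_all add: n_def)
  have n0: "n > 0" using M Mn by simp
  have N3: "4 * n \<ge> 3" using n0 by simp
  have uo: "odd u"
  proof
    assume "even u"
    then have "2 dvd u" by simp
    moreover have "(2::int) dvd int M" using Mn by simp
    ultimately have "is_unit (2::int)" using cu by (metis coprime_common_divisor)
    then show False by simp
  qed
  have cun: "coprime u (int n)" by (rule coprime_divisors[OF dvd_refl _ cu]) (simp add: Mn)
  have cc: "coprime (u + int n * k) (int (4 * n))" for k :: int
  proof -
    have "coprime (u + int n * k) (int n)" by (rule cong_imp_coprime[OF _ cun]) (simp add: cong_iff_lin)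
    moreover have "odd (u + int n * k)" using uo n2 by simp
    then have "coprime (u + int n * k) 4" by (rule odd_cop4)
    ultimately show ?thesis by simp
  qed
  have cs: "cos (2 * (of_int u * pi / real (4*n))) \<noteq> 0"
  proof -
    have "2 * (of_int u * pi / real (4*n)) = of_int u * pi / real M" using Mn by (simp add: field_simps)
    then show ?thesis using cos_ne[OF M cu] by simp
  qed
  have r: "2 * TT (4*n) (2 * u) = TT (4*n) (u + int n) + TT (4*n) (u + 3 * int n)"
    by (rule J2_rel[OF n0 cs])
  have "inV (4*n) (TT (4*n) (u + int n) + TT (4*n) (u + 3 * int n))"
    using cc[of 1] cc[of 3] by (intro inV_add unit_inV[OF N3]) (simp_all add: mult.commute)
  then have "inV (4*n) (of_rat (1/2) * (2 * TT (4*n) (2 * u)))" unfolding r by (rule inV_scale)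
  moreover have "TT (4*n) (2 * u) = TT M u" using TT_scale[of 2 M u] Mn by simp
  moreover have "4 * n = 2 * M" using Mn by simp
  ultimately show ?thesis by (simp add: of_rat_divide)
qed

lemma dvd2n: "odd n \<Longrightarrow> int n dvd d \<Longrightarrow> even d \<Longrightarrow> 2 * int n dvd d"
  by (rule divides_mult) simp_all

lemma TT2: "TT (4*n) (2 * x) = TT (2*n) x"
  using TT_scale[of 2 "2*n" x] by simp

lemma step_2_two:
  assumes no: "odd n" and n3: "n \<ge> 3" and cu: "coprime u (int (2*n))"
  shows "inV (4*n) (TT (2*n) u)"
proof -
  define N where "N = 4 * n"
  define M where "M = 2 * n"
  define K where "K = 2 * totient n - 2"
  define L where "L = K + 2"
  have N3: "N \<ge> 3" using n3 by (simp add: N_def)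
  have M3: "M \<ge> 3" using n3 by (simp add: M_def)
  have n0: "n > 0" using n3 by simp
  have tot: "totient n \<ge> 1" using n0 by (simp add: Suc_le_eq)
  have L2: "L = 2 * totient n" using tot by (simp add: L_def K_def)
  have c2n: "coprime 2 n" using no by simp
  have eu: "[2 ^ L = 1] (mod int n)"
  proof -
    have "[int 2 ^ totient n = 1] (mod int n)" by (rule euler_int[OF c2n])
    then have "[(2 ^ totient n) ^ 2 = (1::int) ^ 2] (mod int n)" by (intro cong_pow) simp
    then show ?thesis by (simp add: L2 power_mult[symmetric] mult.commute)
  qed
  have Wl: "inV N (TT N (4 * w))" if cw: "coprime w (int n)" for w
  proof -
    have cs: "cos (2 * (of_int (2*w) * pi / real (4*n))) \<noteq> 0"
    proof -
      have e: "2 * (of_int (2*w) * pi / real (4*n)) = of_int w * pi / real n" using n0 by (simp add: field_simps)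
      show ?thesis unfolding e by (rule cos_ne[OF n3 cw])
    qed
    have r: "2 * TT (4*n) (2 * (2*w)) = TT (4*n) (2*w + int n) + TT (4*n) (2*w + 3 * int n)"
      by (rule J2_rel[OF n0 cs])
    have cc: "coprime (2*w + int n * k) (int (4 * n))" if "odd k" for k :: int
    proof -
      have h: "coprime (2*w) (int n)" using cw c2n by simp
      have "coprime (2*w + int n * k) (int n)" by (rule cong_imp_coprime[OF _ h]) (simp add: cong_iff_lin)
      moreover have "odd (2*w + int n * k)" using no that by simp
      then have "coprime (2*w + int n * k) 4" by (rule odd_cop4)
      ultimately show ?thesis by simp
    qed
    have "inV (4*n) (TT (4*n) (2*w + int n) + TT (4*n) (2*w + 3 * int n))"
      using cc[of 1] cc[of 3] N3 unfolding N_def by (intro inV_add unit_inV) (simp_all add: mult.commute)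
    then have "inV (4*n) (of_rat (1/2) * (2 * TT (4*n) (2 * (2*w))))" unfolding r by (rule inV_scale)
    then show ?thesis by (simp add: N_def of_rat_divide)
  qed
  have rel: "inV N (of_rat 2 * TT M y - TT M (y * 2 ^ (L - 1) + int n))" if cy: "coprime y (int M)" for y
  proof -
    define z where "z = y * 2 ^ L + int n"
    have yo: "odd y" using cy by (simp add: M_def)
    have cyn: "coprime y (int n)" using cy by (simp add: M_def)
    have zy: "[z = y] (mod int M)"
    proof -
      have "int n dvd 2 ^ L - 1" using eu by (simp add: cong_iff_dvd_diff)
      then have "int n dvd y * (2 ^ L - 1) + int n" by simp
      moreover have "even (y * (2 ^ L - 1) + int n)" using yo no L2 tot n0 by simp
      ultimately have "2 * int n dvd y * (2 ^ L - 1) + int n" by (rule dvd2n[OF no])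
      then show ?thesis by (simp add: cong_iff_dvd_diff z_def M_def algebra_simps)
    qed
    have cz: "coprime z (int M)" using cy zy by (metis cong_imp_coprime cong_sym)
    have cs: "cos (2 * (of_int z * pi / real (4*n))) \<noteq> 0"
    proof -
      have "2 * (of_int z * pi / real (4*n)) = of_int z * pi / real M" using n0 by (simp add: M_def field_simps)
      then show ?thesis using cos_ne[OF M3 cz] by simp
    qed
    have r: "2 * TT (4*n) (2 * z) = TT (4*n) (z + int n) + TT (4*n) (z + 3 * int n)"
      by (rule J2_rel[OF n0 cs])
    have T1: "TT (4*n) (2 * z) = TT M y" using TT2[of n z] TT_cong[OF _ zy] M3 by (simp add: M_def)
    have e2: "z + int n = 2 * (y * 2 ^ (L - 1) + int n)" by (simp add: z_def L_def algebra_simps)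
    have e3: "z + 3 * int n = 4 * (y * 2 ^ K + int n)" by (simp add: z_def L_def algebra_simps)
    have T2: "TT (4*n) (z + int n) = TT M (y * 2 ^ (L - 1) + int n)" unfolding e2 TT2 M_def ..
    have cw: "coprime (y * 2 ^ K + int n) (int n)"
    proof -
      have h: "coprime (y * 2 ^ K) (int n)" using cyn c2n by simp
      show ?thesis by (rule cong_imp_coprime[OF _ h]) (simp add: cong_iff_lin)
    qed
    have "inV N (TT (4*n) (z + 3 * int n))" unfolding e3 N_def[symmetric] by (rule Wl[OF cw])
    moreover have "of_rat 2 * TT M y - TT M (y * 2 ^ (L - 1) + int n) = TT (4*n) (z + 3 * int n)"
      using r T1 T2 by simp
    ultimately show ?thesis by simp
  qed
  define Y where "Y i = u * 2 ^ ((L - 1) * i) + (if i = 0 then 0 else int n)" for i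
  define G where "G i = TT M (Y i)" for i
  have cY: "coprime (Y i) (int M)" for i
  proof (cases "i = 0")
    case True then show ?thesis using cu by (simp add: Y_def M_def)
  next
    case False
    have cun: "coprime u (int n)" using cu by simp
    have h: "coprime (u * 2 ^ ((L - 1) * i)) (int n)" using cun c2n by simp
    have "coprime (Y i) (int n)" by (rule cong_imp_coprime[OF _ h]) (use False in \<open>simp add: Y_def cong_iff_lin\<close>)
    moreover have "(L - 1) * i \<noteq> 0" using False by (simp add: L_def)
    then have "odd (Y i)" using False no by (simp add: Y_def)
    ultimately show ?thesis by (simp add: M_def)
  qed
  have "inV N (G 0)"
  proof (rule inV_cycle[where c = 2 and L = L])
    fix i assume "i < L"
    have "[Y i * 2 ^ (L - 1) + int n = Y (Suc i)] (mod int M)"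
    proof (cases "i = 0")
      case True then show ?thesis by (simp add: Y_def)
    next
      case False
      have "Y (Suc i) = (Y i * 2 ^ (L - 1) + int n) + int M * (- (2 ^ K))"
        using False by (simp add: Y_def M_def L_def algebra_simps power_add)
      then show ?thesis unfolding cong_iff_lin by blast
    qed
    then have "TT M (Y i * 2 ^ (L - 1) + int n) = G (Suc i)" unfolding G_def using M3 by (intro TT_cong) auto
    then show "inV N (of_rat 2 * G i - G (Suc i))" using rel[OF cY[of i]] by (simp add: G_def)
  next
    have "[Y L = u] (mod int M)"
    proof -
      have "[2 ^ ((L - 1) * L) = (1::int)] (mod int n)"
        using cong_pow[OF eu, of "L - 1"] by (simp add: power_mult[symmetric] mult.commute)
      then have "int n dvd 2 ^ ((L - 1) * L) - 1" by (simp add: cong_iff_dvd_diff)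
      then have "int n dvd u * (2 ^ ((L - 1) * L) - 1) + int n" by simp
      moreover have "odd u" using cu by simp
      then have "even (u * (2 ^ ((L - 1) * L) - 1) + int n)" using no by (simp add: L_def)
      ultimately have "2 * int n dvd u * (2 ^ ((L - 1) * L) - 1) + int n" by (rule dvd2n[OF no])
      then show ?thesis by (simp add: cong_iff_dvd_diff Y_def M_def L_def algebra_simps)
    qed
    then show "G L = G 0" unfolding G_def using M3 by (intro TT_cong) (auto simp: Y_def)
  next
    have "(2::rat) ^ L \<ge> 2 ^ 2" by (rule power_increasing) (simp_all add: L_def)
    then show "(2::rat) ^ L \<noteq> 1" by auto
  qed
  then show ?thesis by (simp add: G_def Y_def N_def M_def)
qed

lemma prime_step:
  assumes pp: "prime p" and M: "M \<ge> 3" and cu: "coprime u (int M)"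
  shows "inV (p*M) (TT M u)"
proof (cases "p = 2")
  case True
  show ?thesis
  proof (cases "odd M")
    case True
    then show ?thesis using step_2_odd[OF True M cu] \<open>p = 2\<close> by simp
  next
    case False
    show ?thesis
    proof (cases "4 dvd M")
      case True
      then show ?thesis using step_2_four[OF True M cu] \<open>p = 2\<close> by simp
    next
      case F4: False
      have "even M" using False by simp
      then obtain n where Mn: "M = 2 * n" by (rule evenE)
      have no: "odd n" using F4 Mn by auto
      have n3: "n \<ge> 3"
      proof -
        have "n \<ge> 2" using M Mn by simp
        moreover have "n \<noteq> 2" using no by auto
        ultimately show ?thesis by simp
      qed
      have "inV (4*n) (TT (2*n) u)" by (rule step_2_two[OF no n3]) (use cu Mn in simp)
      then show ?thesis using Mn \<open>p = 2\<close> by simp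
    qed
  qed
next
  case False
  have "p \<ge> 2" using pp by (simp add: prime_ge_2_nat)
  then have po: "odd p" using pp False by (intro prime_odd_nat) auto
  show ?thesis
  proof (cases "p dvd M")
    case True then show ?thesis by (rule step_odd_dvd[OF pp po _ M cu])
  next
    case False then show ?thesis by (rule step_odd_ndvd[OF pp po _ M cu])
  qed
qed

lemma incl_prime:
  assumes pp: "prime p" and M: "M \<ge> 3" and r: "inV M r"
  shows "inV (p*M) r"
proof -
  obtain c where rc: "r = (\<Sum>j\<in>PP M. of_rat (c j) * star_point M j)" using r unfolding inV_def by blast
  have "inV (p*M) (\<Sum>j\<in>PP M. of_rat (c j) * star_point M j)"
  proof (rule inV_sum[OF finite_PP])
    fix j assume "j \<in> PP M"
    then have "gcd j M = 1" by (simp add: PP_def)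
    then have "coprime j M" by (rule coprime_iff_gcd_eq_1[THEN iffD2])
    then have "coprime (int j) (int M)" by simp
    then have "inV (p*M) (TT M (int j))" by (rule prime_step[OF pp M])
    then show "inV (p*M) (of_rat (c j) * star_point M j)" unfolding star_TT by (rule inV_scale)
  qed
  then show ?thesis using rc by simp
qed

lemma incl:
  assumes M: "M \<ge> 3" and k: "k \<ge> 1" and r: "inV M r"
  shows "inV (M*k) r"
  using k
proof (induction k rule: less_induct)
  case (less k)
  show ?case
  proof (cases "k = 1")
    case True then show ?thesis using r by simp
  next
    case False
    then obtain p where pp: "prime p" and pk: "p dvd k" using prime_factor_nat[of k] by blast
    obtain k' where kk: "k = p * k'" using pk by (elim dvdE)
    have p2: "p \<ge> 2" using pp by (simp add: prime_ge_2_nat)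
    have k'1: "k' \<ge> 1" using kk less.prems by (cases k') auto
    have "k' < k" using kk p2 k'1 by simp
    then have IH: "inV (M*k') r" using less.IH k'1 by blast
    have "M \<le> M * k'" using k'1 by simp
    then have "M * k' \<ge> 3" using M by linarith
    then have "inV (p*(M*k')) r" by (rule incl_prime[OF pp _ IH])
    then show ?thesis by (simp add: kk mult.commute mult.left_commute)
  qed
qed

theorem lemma9:
  fixes N k :: nat
  assumes "N \<ge> 3" and "1 \<le> k" and "2 * k < N" and "gcd k N > 1"
  shows "\<exists>c :: nat \<Rightarrow> rat.
           star_point N k =
             (\<Sum>j\<in>{j. 1 \<le> j \<and> 2 * j < N \<and> gcd j N = 1}.
                of_rat (c j) * star_point N j)"
proof -
  define h where "h = gcd k N"
  define M where "M = N div h"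
  define k' where "k' = k div h"
  have h0: "h > 0" using assms by (simp add: h_def)
  have NhM: "N = M * h" using h0 by (simp add: M_def h_def)
  have kh: "k = k' * h" by (simp add: k'_def h_def)
  have hk: "h \<le> k" using assms by (simp add: h_def gcd_le1_nat)
  have M3: "M \<ge> 3"
  proof (rule ccontr)
    assume "\<not> M \<ge> 3"
    then have "M \<le> 2" by simp
    then have "N \<le> 2 * h" using NhM by simp
    then show False using hk assms by simp
  qed
  have cop: "coprime (int k') (int M)"
  proof -
    have "coprime k' M" unfolding k'_def M_def h_def
      by (rule div_gcd_coprime) (use assms in simp)
    then show ?thesis by simp
  qed
  have "star_point N k = TT M (int k')"
  proof -
    have "star_point N k = TT (h * M) (int h * int k')" by (simp add: star_TT NhM kh mult.commute)
    also have "\<dots> = TT M (int k')" using h0 by (rule TT_scale)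
    finally show ?thesis .
  qed
  moreover have "inV M (TT M (int k'))" by (rule unit_inV[OF M3 cop])
  then have "inV (M*h) (TT M (int k'))" using M3 h0 by (intro incl) auto
  ultimately have "inV N (star_point N k)" using NhM by simp
  then show ?thesis by (simp add: inV_def PP_def)
qed

end
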